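(* Let $E$ be a free $A_n(K)$-module with basis $e_1,\dots,e_m$, let $f\in E$, and let $G=\{g_1,\dots,g_r\}\subseteq E$ be an $(x,\partial)$-Gröbner basis in $E$ (i.e. an $(x,\partial)$-Gröbner basis of the submodule $\sum_{i=1}^r A_n(K)g_i$). Then there exist an element $g\in E$ and elements $Q_1,\dots,Q_r\in A_n(K)$ such that $f-g=\sum_{i=1}^r Q_ig_i$ and $g$ is $(x,\partial)$-reduced with respect to $G$.
   Context: $K$ is a field of characteristic zero and $A_n(K)$ is the Weyl algebra: the $K$-algebra generated by $x_1,\dots,x_n,\partial_1,\dots,\partial_n$ in which all pairs of generators commute except that $\partial_ix_i=x_i\partial_i+1$ ($i=1,\dots,n$). $\Theta$ denotes the set of monomials $x^\alpha\partial^\beta=x_1^{\alpha_1}\cdots x_n^{\alpha_n}\partial_1^{\beta_1}\cdots\partial_n^{\beta_n}$ ($\alpha,\beta\in\mathbf N^n$); it is a $K$-basis of $A_n(K)$. For $\theta=x^\alpha\partial^\beta$ put $ord_x\theta=|\alpha|=\sum\alpha_i$ and $ord_\partial\theta=|\beta|$. For $\theta=x^\alpha\partial^\beta$, $\theta'=x^\gamma\partial^\delta$ we say $\theta$ divides $\theta'$ ($\theta\mid\theta'$) if $\alpha_i\le\gamma_i,\beta_i\le\delta_i$ for all $i$, and then $\theta'/\theta:=x^{\gamma-\alpha}\partial^{\delta-\beta}\in\Theta$. The set $\Theta e=\{\theta e_i\}$ of terms is a $K$-basis of $E$; every nonzero $f\in E$ is uniquely a $K$-linear combination of distinct terms with nonzero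 coefficients, and these terms are said to appear in $f$. For a term $\theta e_i$, $ord_x(\theta e_i)=ord_x\theta$, $ord_\partial(\theta e_i)=ord_\partial\theta$. For $\theta=x^\alpha\partial^\beta\in\Theta$ and a term $w=x^\gamma\partial^\delta e_i$, the notation $\theta w$ denotes the term $x^{\alpha+\gamma}\partial^{\beta+\delta}e_i$ (exponent addition), whereas $\theta f$ for $f\in E$ denotes the module action. A term $w=\theta'e_i$ is a multiple of (is divisible by) $v=\theta e_j$, written $v\mid w$, if $i=j$ and $\theta\mid\theta'$; then $w/v:=\theta'/\theta$. Orders on $\Theta$: $x^\alpha\partial^\beta<_x x^\gamma\partial^\delta$ iff $(|\alpha|,|\beta|,\alpha_1,\dots,\alpha_n,\beta_1,\dots,\beta_n)$ is lexicographically smaller than $(|\gamma|,|\delta|,\gamma_1,\dots,\gamma_n,\delta_1,\dots,\delta_n)$; $x^\alpha\partial^\beta<_\partial x^\gamma\partial^\delta$ iff $(|\beta|,|\alpha|,\beta_1,\dots,\beta_n,\alpha_1,\dots,\alpha_n)$ is lexicographically smaller than $(|\delta|,|\gamma|,\delta_1,\dots,\delta_n,\gamma_1,\dots,\gamma_n)$. On terms, $\theta e_i<_x\theta'e_j$ iff $\theta<_x\theta'$, or $\theta=\theta'$ and $i<j$; similarly for $<_\partial$. For nonzero $f\in E$, the $x$-leader $u_f$ is the $<_x$-greatest term appearing in $f$ and the $\partial$-leader $v_f$ is the $<_\partial$-greatest term appearing in $f$; $lc_x(f)$ is the coefficient of $u_f$ in $f$. For $g\ne0$, an element $f\in E$ is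 $(x,\partial)$-reduced with respect to $g$ if $f$ contains no term of the form $\theta u_g$ ($\theta\in\Theta$) with $ord_\partial(\theta v_g)\le ord_\partial v_f$ (the zero element is reduced); $f$ is $(x,\partial)$-reduced with respect to a set $G$ if it is so with respect to every element of $G$. For nonzero $f$, let $d(f)=ord_\partial v_f-ord_\partial u_f$. A finite set $G=\{g_1,\dots,g_r\}$ of nonzero elements of a submodule $N\subseteq E$ is an $(x,\partial)$-Gröbner basis of $N$ if for every nonzero $f\in N$ there is $i$ with $u_{g_i}\mid u_f$ and $d(g_i)\le d(f)$. *)

theory Defs
  imports Main
begin

(* Monomials x^alpha d^beta are pairs (alpha, beta) of exponent vectors nat => nat;
   variable i (0-based) corresponds to x_{i+1}, d_{i+1}.
   Terms theta e_i are pairs (theta, i) with i < m (0-based: e_{i+1}). *)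
type_synonym mono = "(nat \<Rightarrow> nat) \<times> (nat \<Rightarrow> nat)"
type_synonym trm = "mono \<times> nat"
type_synonym 'k weyl = "mono \<Rightarrow> 'k"
type_synonym 'k fmod = "trm \<Rightarrow> 'k"

definition supp :: "('a \<Rightarrow> 'k::zero) \<Rightarrow> 'a set" where
  "supp f = {w. f w \<noteq> 0}"

definition in_mono :: "nat \<Rightarrow> mono \<Rightarrow> bool" where
  "in_mono n \<theta> = (\<forall>i\<ge>n. fst \<theta> i = 0 \<and> snd \<theta> i = 0)"

definition in_weyl :: "nat \<Rightarrow> 'k::zero weyl \<Rightarrow> bool" where
  "in_weyl n P = (finite (supp P) \<and> (\<forall>\<theta>\<in>supp P. in_mono n \<theta>))"

definition in_E :: "nat \<Rightarrow> nat \<Rightarrow> 'k::zero fmod \<Rightarrow> bool" where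
  "in_E n m f = (finite (supp f) \<and> (\<forall>w\<in>supp f. in_mono n (fst w) \<and> snd w < m))"

(* |alpha| for a finitely supported exponent vector *)
definition deg :: "(nat \<Rightarrow> nat) \<Rightarrow> nat" where
  "deg a = sum a {i. a i \<noteq> 0}"

definition lexless :: "(nat \<Rightarrow> nat) \<Rightarrow> (nat \<Rightarrow> nat) \<Rightarrow> bool" where
  "lexless a b = (\<exists>j. (\<forall>i<j. a i = b i) \<and> a j < b j)"

definition mono_less_x :: "mono \<Rightarrow> mono \<Rightarrow> bool" where
  "mono_less_x t s =
     (deg (fst t) < deg (fst s) \<or>
      (deg (fst t) = deg (fst s) \<and>
       (deg (snd t) < deg (snd s) \<or>
        (deg (snd t) = deg (snd s) \<and>
         (lexless (fst t) (fst s) \<or> (fst t = fst s \<and> lexless (snd t) (snd s)))))))"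

definition mono_less_d :: "mono \<Rightarrow> mono \<Rightarrow> bool" where
  "mono_less_d t s =
     (deg (snd t) < deg (snd s) \<or>
      (deg (snd t) = deg (snd s) \<and>
       (deg (fst t) < deg (fst s) \<or>
        (deg (fst t) = deg (fst s) \<and>
         (lexless (snd t) (snd s) \<or> (snd t = snd s \<and> lexless (fst t) (fst s)))))))"

definition trm_less_x :: "trm \<Rightarrow> trm \<Rightarrow> bool" where
  "trm_less_x v w = (mono_less_x (fst v) (fst w) \<or> (fst v = fst w \<and> snd v < snd w))"

definition trm_less_d :: "trm \<Rightarrow> trm \<Rightarrow> bool" where
  "trm_less_d v w = (mono_less_d (fst v) (fst w) \<or> (fst v = fst w \<and> snd v < snd w))"

definition ux :: "'k::zero fmod \<Rightarrow> trm" where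
  "ux f = (THE w. w \<in> supp f \<and> (\<forall>v\<in>supp f. v \<noteq> w \<longrightarrow> trm_less_x v w))"

definition vd :: "'k::zero fmod \<Rightarrow> trm" where
  "vd f = (THE w. w \<in> supp f \<and> (\<forall>v\<in>supp f. v \<noteq> w \<longrightarrow> trm_less_d v w))"

definition ord_d :: "trm \<Rightarrow> nat" where
  "ord_d w = deg (snd (fst w))"

definition dd :: "'k::zero fmod \<Rightarrow> int" where
  "dd f = int (ord_d (vd f)) - int (ord_d (ux f))"

definition trm_dvd :: "trm \<Rightarrow> trm \<Rightarrow> bool" where
  "trm_dvd v w = (snd v = snd w \<and> (\<forall>i. fst (fst v) i \<le> fst (fst w) i \<and> snd (fst v) i \<le> snd (fst w) i))"

definition tmul :: "mono \<Rightarrow> trm \<Rightarrow> trm" where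
  "tmul \<theta> w = (((\<lambda>i. fst \<theta> i + fst (fst w) i), (\<lambda>i. snd \<theta> i + snd (fst w) i)), snd w)"

(* module action of the monomial x^a d^b on the term x^c d^d e_i, via the normal-ordering
   (Leibniz) rule  d^b x^c = sum_k prod_j C(b_j,k_j) C(c_j,k_j) k_j! x^(c-k) d^(b-k) *)
definition mono_act :: "mono \<Rightarrow> trm \<Rightarrow> 'k::field_char_0 fmod" where
  "mono_act \<theta> w = (\<lambda>v. if snd v = snd w then
      (\<Sum>k\<in>{k. \<forall>j. k j \<le> snd \<theta> j \<and> k j \<le> fst (fst w) j \<and>
               fst (fst v) j + k j = fst \<theta> j + fst (fst w) j \<and>
               snd (fst v) j + k j = snd \<theta> j + snd (fst w) j}.
         of_nat (\<Prod>j\<in>{j. k j \<noteq> 0}. (snd \<theta> j choose k j) * (fst (fst w) j choose k j) * fact (k j)))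
    else 0)"

definition act :: "'k::field_char_0 weyl \<Rightarrow> 'k fmod \<Rightarrow> 'k fmod" where
  "act P f = (\<lambda>v. \<Sum>\<theta>\<in>supp P. \<Sum>w\<in>supp f. P \<theta> * f w * mono_act \<theta> w v)"

definition submod :: "nat \<Rightarrow> nat \<Rightarrow> (nat \<Rightarrow> 'k::field_char_0 fmod) \<Rightarrow> 'k fmod set" where
  "submod n r g = {(\<lambda>v. \<Sum>i<r. act (Q i) (g i) v) | Q. \<forall>i<r. in_weyl n (Q i)}"

definition is_GB :: "nat \<Rightarrow> (nat \<Rightarrow> 'k::field_char_0 fmod) \<Rightarrow> 'k fmod set \<Rightarrow> bool" where
  "is_GB r g N = ((\<forall>i<r. g i \<noteq> (\<lambda>_. 0) \<and> g i \<in> N) \<and>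
     (\<forall>f\<in>N. f \<noteq> (\<lambda>_. 0) \<longrightarrow> (\<exists>i<r. trm_dvd (ux (g i)) (ux f) \<and> dd (g i) \<le> dd f)))"

definition reduced_wrt :: "'k::zero fmod \<Rightarrow> 'k fmod \<Rightarrow> bool" where
  "reduced_wrt g f = (f = (\<lambda>_. 0) \<or>
     (\<forall>\<theta>. f (tmul \<theta> (ux g)) \<noteq> 0 \<longrightarrow> \<not> ord_d (tmul \<theta> (vd g)) \<le> ord_d (vd f)))"

end

theory Submission imports Defs begin

lemma deg_eq: "\<forall>i\<ge>n. a i = 0 \<Longrightarrow> deg a = sum a {..<n}"
proof -
  assume h: "\<forall>i\<ge>n. a i = 0"
  have s: "{i. a i \<noteq> 0} \<subseteq> {..<n}"
  proof
    fix i assume "i \<in> {i. a i \<noteq> 0}"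
    hence ai: "a i \<noteq> 0" by simp
    have "i < n"
    proof (rule ccontr)
      assume "\<not> i < n"
      hence "n \<le> i" by simp
      thus False using h ai by simp
    qed
    thus "i \<in> {..<n}" by simp
  qed
  have "sum a {i. a i \<noteq> 0} = sum a {..<n}"
    by (rule sum.mono_neutral_left) (use s in auto)
  thus ?thesis unfolding deg_def .
qed

lemma lexless_irrefl: "\<not> lexless a a"
  unfolding lexless_def by auto

lemma lexless_trans: "lexless a b \<Longrightarrow> lexless b c \<Longrightarrow> lexless a c"
  unfolding lexless_def
proof (elim exE conjE)
  fix j k assume 1: "\<forall>i<j. a i = b i" "a j < b j" and 2: "\<forall>i<k. b i = c i" "b k < c k"
  show "\<exists>j. (\<forall>i<j. a i = c i) \<and> a j < c j"
  proof (cases "j < k")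
    case True thus ?thesis using 1 2 by (intro exI[of _ j]) auto
  next
    case False
    show ?thesis
    proof (cases "j = k")
      case True thus ?thesis using 1 2 by (intro exI[of _ j]) auto
    next
      case False
      with \<open>\<not> j < k\<close> have "k < j" by simp
      thus ?thesis using 1 2 by (intro exI[of _ k]) auto
    qed
  qed
qed

lemma lexless_total: "a \<noteq> b \<Longrightarrow> lexless a b \<or> lexless b a"
proof -
  assume "a \<noteq> b"
  then obtain j0 where "a j0 \<noteq> b j0" by auto
  define j where "j = (LEAST j. a j \<noteq> b j)"
  have j: "a j \<noteq> b j" unfolding j_def by (rule LeastI) fact
  have lt: "\<forall>i<j. a i = b i" unfolding j_def using not_less_Least by blast
  show ?thesis
  proof (cases "a j < b j")
    case True thus ?thesis using lt unfolding lexless_def by blast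
  next
    case False hence "b j < a j" using j by simp
    thus ?thesis using lt unfolding lexless_def by (metis)
  qed
qed

lemma mono_less_x_irrefl: "\<not> mono_less_x a a"
  unfolding mono_less_x_def by (auto simp: lexless_irrefl)

lemma mono_less_x_trans: "mono_less_x a b \<Longrightarrow> mono_less_x b c \<Longrightarrow> mono_less_x a c"
  unfolding mono_less_x_def by (auto dest: lexless_trans)

lemma mono_less_x_total: "a \<noteq> b \<Longrightarrow> mono_less_x a b \<or> mono_less_x b a"
proof -
  assume ab: "a \<noteq> b"
  show ?thesis
  proof (cases "deg (fst a) = deg (fst b)")
    case False thus ?thesis unfolding mono_less_x_def by linarith
  next
    case T1: True
    show ?thesis
    proof (cases "deg (snd a) = deg (snd b)")
      case False thus ?thesis using T1 unfolding mono_less_x_def by linarith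
    next
      case T2: True
      show ?thesis
      proof (cases "fst a = fst b")
        case False thus ?thesis using T1 T2 lexless_total[OF False] unfolding mono_less_x_def by auto
      next
        case True
        hence "snd a \<noteq> snd b" using ab prod_eqI by blast
        thus ?thesis using T1 T2 True lexless_total[of "snd a" "snd b"] unfolding mono_less_x_def by auto
      qed
    qed
  qed
qed

lemma mono_less_d_irrefl: "\<not> mono_less_d a a"
  unfolding mono_less_d_def by (auto simp: lexless_irrefl)

lemma mono_less_d_trans: "mono_less_d a b \<Longrightarrow> mono_less_d b c \<Longrightarrow> mono_less_d a c"
  unfolding mono_less_d_def by (auto dest: lexless_trans)

lemma mono_less_d_total: "a \<noteq> b \<Longrightarrow> mono_less_d a b \<or> mono_less_d b a"
proof -
  assume ab: "a \<noteq> b"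
  show ?thesis
  proof (cases "deg (snd a) = deg (snd b)")
    case False thus ?thesis unfolding mono_less_d_def by linarith
  next
    case T1: True
    show ?thesis
    proof (cases "deg (fst a) = deg (fst b)")
      case False thus ?thesis using T1 unfolding mono_less_d_def by linarith
    next
      case T2: True
      show ?thesis
      proof (cases "snd a = snd b")
        case False thus ?thesis using T1 T2 lexless_total[OF False] unfolding mono_less_d_def by auto
      next
        case True
        hence "fst a \<noteq> fst b" using ab prod_eqI by blast
        thus ?thesis using T1 T2 True lexless_total[of "fst a" "fst b"] unfolding mono_less_d_def by auto
      qed
    qed
  qed
qed

lemma trm_less_x_irrefl: "\<not> trm_less_x a a"
  unfolding trm_less_x_def by (auto simp: mono_less_x_irrefl)
lemma trm_less_x_trans: "trm_less_x a b \<Longrightarrow> trm_less_x b c \<Longrightarrow> trm_less_x a c"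
  unfolding trm_less_x_def by (auto dest: mono_less_x_trans)
lemma trm_less_x_total: "a \<noteq> b \<Longrightarrow> trm_less_x a b \<or> trm_less_x b a"
proof (cases "fst a = fst b")
  case True
  assume "a \<noteq> b"
  hence "snd a \<noteq> snd b" using True prod_eqI by blast
  thus ?thesis unfolding trm_less_x_def using True by auto
next
  case False
  thus ?thesis unfolding trm_less_x_def using mono_less_x_total[OF False] by blast
qed
lemma trm_less_d_irrefl: "\<not> trm_less_d a a"
  unfolding trm_less_d_def by (auto simp: mono_less_d_irrefl)
lemma trm_less_d_trans: "trm_less_d a b \<Longrightarrow> trm_less_d b c \<Longrightarrow> trm_less_d a c"
  unfolding trm_less_d_def by (auto dest: mono_less_d_trans)
lemma trm_less_d_total: "a \<noteq> b \<Longrightarrow> trm_less_d a b \<or> trm_less_d b a"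
proof (cases "fst a = fst b")
  case True
  assume "a \<noteq> b"
  hence "snd a \<noteq> snd b" using True prod_eqI by blast
  thus ?thesis unfolding trm_less_d_def using True by auto
next
  case False
  thus ?thesis unfolding trm_less_d_def using mono_less_d_total[OF False] by blast
qed

lemma finite_max_ex:
  fixes R :: "'a \<Rightarrow> 'a \<Rightarrow> bool"
  assumes tr: "\<And>a b c. R a b \<Longrightarrow> R b c \<Longrightarrow> R a c"
    and tot: "\<And>a b. a \<noteq> b \<Longrightarrow> R a b \<or> R b a"
  shows "finite A \<Longrightarrow> A \<noteq> {} \<Longrightarrow> \<exists>w. w \<in> A \<and> (\<forall>v\<in>A. v \<noteq> w \<longrightarrow> R v w)"
proof (induction A rule: finite_ne_induct)
  case (singleton x) thus ?case by auto
next
  case (insert x F)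
  then obtain w where w: "w \<in> F" "\<forall>v\<in>F. v \<noteq> w \<longrightarrow> R v w" by auto
  show ?case
  proof (cases "R x w")
    case True thus ?thesis using w by auto
  next
    case False
    hence "x = w \<or> R w x" using tot by blast
    hence "R w x" using w insert by auto
    have "\<forall>v\<in>insert x F. v \<noteq> x \<longrightarrow> R v x"
    proof (intro ballI impI)
      fix v assume "v \<in> insert x F" "v \<noteq> x"
      hence "v \<in> F" by simp
      show "R v x"
      proof (cases "v = w")
        case True thus ?thesis using \<open>R w x\<close> by simp
      next
        case False hence "R v w" using w \<open>v \<in> F\<close> by blast
        thus ?thesis using \<open>R w x\<close> by (rule tr)
      qed
    qed
    thus ?thesis by blast
  qed
qed

lemma max_unique:
  fixes R :: "'a \<Rightarrow> 'a \<Rightarrow> bool"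
  assumes irr: "\<And>a. \<not> R a a" and tr: "\<And>a b c. R a b \<Longrightarrow> R b c \<Longrightarrow> R a c"
    and tot: "\<And>a b. a \<noteq> b \<Longrightarrow> R a b \<or> R b a"
    and "finite A" "A \<noteq> {}"
  shows "\<exists>!w. w \<in> A \<and> (\<forall>v\<in>A. v \<noteq> w \<longrightarrow> R v w)"
proof -
  have ex: "\<exists>w. w \<in> A \<and> (\<forall>v\<in>A. v \<noteq> w \<longrightarrow> R v w)"
    apply (rule finite_max_ex[of R A])
       apply (erule (1) tr)
      apply (erule tot)
     apply (rule assms(4))
    apply (rule assms(5))
    done
  obtain w where w: "w \<in> A \<and> (\<forall>v\<in>A. v \<noteq> w \<longrightarrow> R v w)"
    using ex by blast
  show ?thesis
  proof (rule ex1I[of _ w])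
    fix y assume y: "y \<in> A \<and> (\<forall>v\<in>A. v \<noteq> y \<longrightarrow> R v y)"
    show "y = w"
    proof (rule ccontr)
      assume "y \<noteq> w"
      hence a1: "R y w" using w y by blast
      have a2: "R w y" using w y \<open>y \<noteq> w\<close> by metis
      have "R y y" by (rule tr[OF a1 a2])
      thus False using irr by blast
    qed
  qed (rule w)
qed

lemma ux_prop:
  assumes "finite (supp f)" "supp f \<noteq> {}"
  shows "ux f \<in> supp f \<and> (\<forall>v\<in>supp f. v \<noteq> ux f \<longrightarrow> trm_less_x v (ux f))"
  unfolding ux_def
  by (rule theI') (rule max_unique[OF trm_less_x_irrefl trm_less_x_trans trm_less_x_total assms])

lemma vd_prop:
  assumes "finite (supp f)" "supp f \<noteq> {}"
  shows "vd f \<in> supp f \<and> (\<forall>v\<in>supp f. v \<noteq> vd f \<longrightarrow> trm_less_d v (vd f))"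
  unfolding vd_def
  by (rule theI') (rule max_unique[OF trm_less_d_irrefl trm_less_d_trans trm_less_d_total assms])

lemma trm_less_d_ord: "trm_less_d v w \<Longrightarrow> ord_d v \<le> ord_d w"
  unfolding trm_less_d_def mono_less_d_def ord_d_def by auto

lemma vd_ord:
  assumes "finite (supp f)" "v \<in> supp f"
  shows "ord_d v \<le> ord_d (vd f)"
  using vd_prop[of f] assms trm_less_d_ord by fastforce


definition Kset :: "mono \<Rightarrow> trm \<Rightarrow> trm \<Rightarrow> (nat \<Rightarrow> nat) set" where
  "Kset \<theta> w v = {k. \<forall>j. k j \<le> snd \<theta> j \<and> k j \<le> fst (fst w) j \<and>
               fst (fst v) j + k j = fst \<theta> j + fst (fst w) j \<and>
               snd (fst v) j + k j = snd \<theta> j + snd (fst w) j}"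

definition coef :: "mono \<Rightarrow> trm \<Rightarrow> (nat \<Rightarrow> nat) \<Rightarrow> 'k::field_char_0" where
  "coef \<theta> w k = of_nat (\<Prod>j\<in>{j. k j \<noteq> 0}. (snd \<theta> j choose k j) * (fst (fst w) j choose k j) * fact (k j))"

lemma mono_act_alt: "mono_act \<theta> w v = (if snd v = snd w then (\<Sum>k\<in>Kset \<theta> w v. coef \<theta> w k) else 0)"
  unfolding mono_act_def Kset_def coef_def by (rule refl)

lemma tmul_simps[simp]: "snd (tmul \<theta> w) = snd w" "fst (fst (tmul \<theta> w)) = (\<lambda>i. fst \<theta> i + fst (fst w) i)"
  "snd (fst (tmul \<theta> w)) = (\<lambda>i. snd \<theta> i + snd (fst w) i)"
  by (simp_all add: tmul_def)

lemma mono_act_nz: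
  assumes "mono_act \<theta> w v \<noteq> (0::'k::field_char_0)"
  shows "snd v = snd w \<and> (\<exists>k. \<forall>j. k j \<le> snd \<theta> j \<and> k j \<le> fst (fst w) j \<and>
      fst (fst v) j + k j = fst \<theta> j + fst (fst w) j \<and> snd (fst v) j + k j = snd \<theta> j + snd (fst w) j)"
proof -
  have 1: "snd v = snd w"
  proof (rule ccontr)
    assume "snd v \<noteq> snd w" thus False using assms by (simp add: mono_act_alt)
  qed
  have "Kset \<theta> w v \<noteq> {}"
  proof
    assume "Kset \<theta> w v = {}" thus False using assms 1 by (simp add: mono_act_alt)
  qed
  thus ?thesis using 1 unfolding Kset_def by auto
qed

lemma mono_act_lead: "mono_act \<theta> u (tmul \<theta> u) = (1::'k::field_char_0)"
proof -
  have K: "Kset \<theta> u (tmul \<theta> u) = {\<lambda>_. 0}"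
    unfolding Kset_def by (auto simp: fun_eq_iff)
  show ?thesis by (simp add: mono_act_alt K coef_def)
qed

lemma act_superset: "finite T \<Longrightarrow> supp P \<subseteq> T \<Longrightarrow>
   act P g v = (\<Sum>\<theta>\<in>T. \<Sum>w\<in>supp g. P \<theta> * g w * mono_act \<theta> w v)"
  unfolding act_def by (rule sum.mono_neutral_left) (auto simp: supp_def)

lemma act_add: "finite (supp Q) \<Longrightarrow> finite (supp P) \<Longrightarrow>
   act (\<lambda>\<theta>. Q \<theta> + P \<theta>) g v = act Q g v + act P g v"
proof -
  assume fQ: "finite (supp Q)" and fP: "finite (supp P)"
  let ?T = "supp Q \<union> supp P"
  have s: "supp (\<lambda>\<theta>. Q \<theta> + P \<theta>) \<subseteq> ?T" by (auto simp: supp_def)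
  have "act (\<lambda>\<theta>. Q \<theta> + P \<theta>) g v = (\<Sum>\<theta>\<in>?T. \<Sum>w\<in>supp g. (Q \<theta> + P \<theta>) * g w * mono_act \<theta> w v)"
    by (rule act_superset) (use fQ fP s in auto)
  also have "\<dots> = (\<Sum>\<theta>\<in>?T. \<Sum>w\<in>supp g. Q \<theta> * g w * mono_act \<theta> w v) +
                  (\<Sum>\<theta>\<in>?T. \<Sum>w\<in>supp g. P \<theta> * g w * mono_act \<theta> w v)"
    by (simp add: distrib_right sum.distrib)
  also have "\<dots> = act Q g v + act P g v"
    using act_superset[of ?T Q g v] act_superset[of ?T P g v] fQ fP by auto
  finally show ?thesis .
qed

lemma act_single: "act (\<lambda>\<theta>'. if \<theta>' = \<theta> then c else 0) g v = (\<Sum>w\<in>supp g. c * g w * mono_act \<theta> w v)"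
  by (subst act_superset[of "{\<theta>}"]) (auto simp: supp_def)

lemma act_zero: "act (\<lambda>_. 0) g v = 0"
  by (simp add: act_def supp_def)


lemma deg_add: "\<forall>i\<ge>n. a i = 0 \<Longrightarrow> \<forall>i\<ge>n. b i = 0 \<Longrightarrow> deg (\<lambda>i. a i + b i) = deg a + deg b"
proof -
  assume a: "\<forall>i\<ge>n. a i = 0" and b: "\<forall>i\<ge>n. b i = 0"
  have ab: "\<forall>i\<ge>n. a i + b i = 0" using a b by simp
  show ?thesis using deg_eq[OF a] deg_eq[OF b] deg_eq[OF ab] by (simp add: sum.distrib)
qed

lemma trm_less_x_deg: "trm_less_x v w \<Longrightarrow> deg (fst (fst v)) \<le> deg (fst (fst w))"
  unfolding trm_less_x_def mono_less_x_def by auto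

lemma in_mono_iff: "in_mono n \<theta> = ((\<forall>i\<ge>n. fst \<theta> i = 0) \<and> (\<forall>i\<ge>n. snd \<theta> i = 0))"
  unfolding in_mono_def by auto

lemma trm_less_x_tmul:
  assumes th: "in_mono n \<theta>" and w: "in_mono n (fst w)" and u: "in_mono n (fst u)"
    and lt: "trm_less_x w u"
  shows "trm_less_x (tmul \<theta> w) (tmul \<theta> u)"
proof -
  have d1: "deg (\<lambda>i. fst \<theta> i + fst (fst w) i) = deg (fst \<theta>) + deg (fst (fst w))"
    by (rule deg_add) (use th w in \<open>auto simp: in_mono_iff\<close>)
  have d2: "deg (\<lambda>i. fst \<theta> i + fst (fst u) i) = deg (fst \<theta>) + deg (fst (fst u))"
    by (rule deg_add) (use th u in \<open>auto simp: in_mono_iff\<close>)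
  have d3: "deg (\<lambda>i. snd \<theta> i + snd (fst w) i) = deg (snd \<theta>) + deg (snd (fst w))"
    by (rule deg_add) (use th w in \<open>auto simp: in_mono_iff\<close>)
  have d4: "deg (\<lambda>i. snd \<theta> i + snd (fst u) i) = deg (snd \<theta>) + deg (snd (fst u))"
    by (rule deg_add) (use th u in \<open>auto simp: in_mono_iff\<close>)
  have L: "\<And>x y c. lexless x y \<Longrightarrow> lexless (\<lambda>i. c i + x i) (\<lambda>i. c i + y i)"
    unfolding lexless_def by auto
  have E: "\<And>x y (c::nat\<Rightarrow>nat). ((\<lambda>i. c i + x i) = (\<lambda>i. c i + y i)) = (x = y)"
    by (auto simp: fun_eq_iff)
  show ?thesis using lt
    unfolding trm_less_x_def mono_less_x_def tmul_def
    by (auto simp: d1 d2 d3 d4 E L prod_eq_iff)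
qed

lemma w_bound:
  fixes g :: "'k::field_char_0 fmod"
  assumes E: "in_E n m g" and ne: "supp g \<noteq> {}" and th: "in_mono n \<theta>"
    and w: "w \<in> supp g" and nz: "mono_act \<theta> w v \<noteq> (0::'k)"
  shows "(v = tmul \<theta> (ux g) \<or> trm_less_x v (tmul \<theta> (ux g))) \<and>
         ord_d v \<le> ord_d (tmul \<theta> (vd g)) \<and> in_mono n (fst v) \<and> snd v < m"
proof -
  have fin: "finite (supp g)" using E by (simp add: in_E_def)
  obtain k where sv: "snd v = snd w" and k: "\<forall>j. k j \<le> snd \<theta> j \<and> k j \<le> fst (fst w) j \<and>
      fst (fst v) j + k j = fst \<theta> j + fst (fst w) j \<and> snd (fst v) j + k j = snd \<theta> j + snd (fst w) j"
    using mono_act_nz[OF nz] by blast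
  have up: "ux g \<in> supp g \<and> (\<forall>v\<in>supp g. v \<noteq> ux g \<longrightarrow> trm_less_x v (ux g))"
    by (rule ux_prop[OF fin ne])
  have vp: "vd g \<in> supp g" using vd_prop[OF fin ne] by blast
  have Ew: "in_mono n (fst w) \<and> snd w < m" using E w by (simp add: in_E_def)
  have Eu: "in_mono n (fst (ux g))" using E up by (simp add: in_E_def)
  have Ev: "in_mono n (fst (vd g))" using E vp by (simp add: in_E_def)
  have tha: "\<forall>i\<ge>n. fst \<theta> i = 0" and thb: "\<forall>i\<ge>n. snd \<theta> i = 0" using th by (auto simp: in_mono_iff)
  have wa: "\<forall>i\<ge>n. fst (fst w) i = 0" and wb: "\<forall>i\<ge>n. snd (fst w) i = 0" using Ew by (auto simp: in_mono_iff)
  have ua: "\<forall>i\<ge>n. fst (fst (ux g)) i = 0" using Eu by (auto simp: in_mono_iff)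
  have vdb: "\<forall>i\<ge>n. snd (fst (vd g)) i = 0" using Ev by (auto simp: in_mono_iff)
  have kz: "\<forall>i\<ge>n. k i = 0" using k thb by (metis le_zero_eq)
  have va: "\<forall>i\<ge>n. fst (fst v) i = 0" using k tha wa by (metis add_is_0 add.right_neutral)
  have vb: "\<forall>i\<ge>n. snd (fst v) i = 0" using k thb wb by (metis add_is_0 add.right_neutral)
  have imv: "in_mono n (fst v)" using va vb by (simp add: in_mono_iff)
  have Sa: "sum (fst (fst v)) {..<n} + sum k {..<n} = sum (fst \<theta>) {..<n} + sum (fst (fst w)) {..<n}"
  proof -
    have "sum (\<lambda>j. fst (fst v) j + k j) {..<n} = sum (\<lambda>j. fst \<theta> j + fst (fst w) j) {..<n}"
      using k by simp
    thus ?thesis by (simp add: sum.distrib)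
  qed
  have Sb: "sum (snd (fst v)) {..<n} + sum k {..<n} = sum (snd \<theta>) {..<n} + sum (snd (fst w)) {..<n}"
  proof -
    have "sum (\<lambda>j. snd (fst v) j + k j) {..<n} = sum (\<lambda>j. snd \<theta> j + snd (fst w) j) {..<n}"
      using k by simp
    thus ?thesis by (simp add: sum.distrib)
  qed
  have ordw: "deg (snd (fst w)) \<le> deg (snd (fst (vd g)))"
    using vd_ord[OF fin w] by (simp add: ord_d_def)
  have ordpart: "ord_d v \<le> ord_d (tmul \<theta> (vd g))"
  proof -
    have "ord_d v = sum (snd (fst v)) {..<n}" by (simp add: ord_d_def deg_eq[OF vb])
    also have "\<dots> \<le> sum (snd \<theta>) {..<n} + sum (snd (fst w)) {..<n}" using Sb by linarith
    also have "\<dots> \<le> sum (snd \<theta>) {..<n} + sum (snd (fst (vd g))) {..<n}"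
      using ordw by (simp add: deg_eq[OF wb] deg_eq[OF vdb])
    also have "\<dots> = ord_d (tmul \<theta> (vd g))"
      by (simp add: ord_d_def deg_add[OF thb vdb] deg_eq[OF thb] deg_eq[OF vdb])
    finally show ?thesis .
  qed
  have wu: "w = ux g \<or> trm_less_x w (ux g)" using up w by blast
  have xpart: "v = tmul \<theta> (ux g) \<or> trm_less_x v (tmul \<theta> (ux g))"
  proof (cases "\<forall>j. k j = 0")
    case True
    have "v = tmul \<theta> w" using k True sv
      by (simp add: tmul_def prod_eq_iff fun_eq_iff)
    moreover have "tmul \<theta> w = tmul \<theta> (ux g) \<or> trm_less_x (tmul \<theta> w) (tmul \<theta> (ux g))"
      using wu trm_less_x_tmul[OF th conjunct1[OF Ew] Eu] by blast
    ultimately show ?thesis by simp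
  next
    case False
    then obtain j where kj: "k j \<noteq> 0" by blast
    have jn: "j < n" using kj kz by (meson not_le)
    have "k j \<le> sum k {..<n}" by (rule member_le_sum) (use jn in auto)
    hence kpos: "0 < sum k {..<n}" using kj by linarith
    have "deg (fst (fst w)) \<le> deg (fst (fst (ux g)))" using wu trm_less_x_deg[of w "ux g"] by auto
    hence "sum (fst (fst w)) {..<n} \<le> sum (fst (fst (ux g))) {..<n}"
      by (simp add: deg_eq[OF wa] deg_eq[OF ua])
    hence "sum (fst (fst v)) {..<n} < sum (fst \<theta>) {..<n} + sum (fst (fst (ux g))) {..<n}"
      using Sa kpos by linarith
    hence "deg (fst (fst v)) < deg (fst (fst (tmul \<theta> (ux g))))"
      by (simp add: deg_eq[OF va] deg_add[OF tha ua] deg_eq[OF tha] deg_eq[OF ua])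
    thus ?thesis unfolding trm_less_x_def mono_less_x_def by simp
  qed
  show ?thesis using xpart ordpart imv sv Ew by simp
qed

lemma act_lead:
  fixes g :: "'k::field_char_0 fmod"
  assumes E: "in_E n m g" and ne: "supp g \<noteq> {}" and th: "in_mono n \<theta>"
  shows "act (\<lambda>\<theta>'. if \<theta>' = \<theta> then c else 0) g (tmul \<theta> (ux g)) = c * g (ux g)"
proof -
  have fin: "finite (supp g)" using E by (simp add: in_E_def)
  have up: "ux g \<in> supp g \<and> (\<forall>v\<in>supp g. v \<noteq> ux g \<longrightarrow> trm_less_x v (ux g))"
    by (rule ux_prop[OF fin ne])
  have Eu: "in_mono n (fst (ux g))" using E up by (simp add: in_E_def)
  have ua: "\<forall>i\<ge>n. fst (fst (ux g)) i = 0" using Eu by (auto simp: in_mono_iff)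
  have zero: "mono_act \<theta> w (tmul \<theta> (ux g)) = (0::'k)" if w: "w \<in> supp g" "w \<noteq> ux g" for w
  proof (rule ccontr)
    assume nz: "mono_act \<theta> w (tmul \<theta> (ux g)) \<noteq> (0::'k)"
    obtain k where sv: "snd (ux g) = snd w" and k: "\<forall>j. k j \<le> snd \<theta> j \<and> k j \<le> fst (fst w) j \<and>
      fst \<theta> j + fst (fst (ux g)) j + k j = fst \<theta> j + fst (fst w) j \<and>
      snd \<theta> j + snd (fst (ux g)) j + k j = snd \<theta> j + snd (fst w) j"
      using mono_act_nz[OF nz] by auto
    have lt: "trm_less_x w (ux g)" using up w by blast
    have Ew: "in_mono n (fst w)" using E w by (simp add: in_E_def)
    have wa: "\<forall>i\<ge>n. fst (fst w) i = 0" using Ew by (auto simp: in_mono_iff)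
    have thb: "\<forall>i\<ge>n. snd \<theta> i = 0" using th by (auto simp: in_mono_iff)
    have kz: "\<forall>i\<ge>n. k i = 0" using k thb by (metis le_zero_eq)
    show False
    proof (cases "\<forall>j. k j = 0")
      case True
      hence "w = ux g" using k sv by (simp add: prod_eq_iff fun_eq_iff)
      thus False using w by simp
    next
      case False
      then obtain j where kj: "k j \<noteq> 0" by blast
      have jn: "j < n" using kj kz by (meson not_le)
      have "k j \<le> sum k {..<n}" by (rule member_le_sum) (use jn in auto)
      hence kpos: "0 < sum k {..<n}" using kj by linarith
      have "sum (\<lambda>j. fst (fst (ux g)) j + k j) {..<n} = sum (fst (fst w)) {..<n}"
        using k by simp
      hence "sum (fst (fst (ux g))) {..<n} < sum (fst (fst w)) {..<n}"
        using kpos by (simp add: sum.distrib)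
      moreover have "deg (fst (fst w)) \<le> deg (fst (fst (ux g)))" using trm_less_x_deg[OF lt] .
      ultimately show False by (simp add: deg_eq[OF wa] deg_eq[OF ua])
    qed
  qed
  have "act (\<lambda>\<theta>'. if \<theta>' = \<theta> then c else 0) g (tmul \<theta> (ux g))
        = (\<Sum>w\<in>supp g. c * g w * mono_act \<theta> w (tmul \<theta> (ux g)))" by (rule act_single)
  also have "\<dots> = c * g (ux g) * mono_act \<theta> (ux g) (tmul \<theta> (ux g)) +
       (\<Sum>w\<in>supp g - {ux g}. c * g w * mono_act \<theta> w (tmul \<theta> (ux g)))"
    using sum.remove[OF fin conjunct1[OF up]] by blast
  also have "(\<Sum>w\<in>supp g - {ux g}. c * g w * mono_act \<theta> w (tmul \<theta> (ux g))) = 0"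
    by (rule sum.neutral) (use zero in auto)
  finally show ?thesis by (simp add: mono_act_lead)
qed


lemma act_bound:
  fixes g :: "'k::field_char_0 fmod"
  assumes E: "in_E n m g" and ne: "supp g \<noteq> {}" and th: "in_mono n \<theta>"
    and nz: "act (\<lambda>\<theta>'. if \<theta>' = \<theta> then c else 0) g v \<noteq> 0"
  shows "(v = tmul \<theta> (ux g) \<or> trm_less_x v (tmul \<theta> (ux g))) \<and>
         ord_d v \<le> ord_d (tmul \<theta> (vd g)) \<and> in_mono n (fst v) \<and> snd v < m"
proof -
  have "(\<Sum>w\<in>supp g. c * g w * mono_act \<theta> w v) \<noteq> 0" using nz by (simp add: act_single)
  then obtain w where w: "w \<in> supp g" and "c * g w * mono_act \<theta> w v \<noteq> 0"
    by (meson sum.neutral)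
  hence "mono_act \<theta> w v \<noteq> (0::'k)" by auto
  thus ?thesis by (rule w_bound[OF E ne th w])
qed

lemma finite_S: "finite {t::trm. in_mono n (fst t) \<and> snd t < m \<and> deg (fst (fst t)) \<le> X \<and> deg (snd (fst t)) \<le> D}"
proof -
  define F where "F B = {a::nat\<Rightarrow>nat. \<forall>x. (x \<in> {..<n} \<longrightarrow> a x \<in> {..B}) \<and> (x \<notin> {..<n} \<longrightarrow> a x = 0)}" for B
  have fF: "finite (F B)" for B unfolding F_def by (rule finite_set_of_finite_funs) auto
  have inF: "a \<in> F B" if z: "\<forall>i\<ge>n. a i = 0" and d: "deg a \<le> B" for a B
  proof -
    have "a x \<le> B" if "x < n" for x
    proof -
      have "a x \<le> sum a {..<n}" by (rule member_le_sum) (use that in auto)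
      thus ?thesis using d deg_eq[OF z] by simp
    qed
    thus ?thesis unfolding F_def using z by (auto simp: not_less)
  qed
  have "{t::trm. in_mono n (fst t) \<and> snd t < m \<and> deg (fst (fst t)) \<le> X \<and> deg (snd (fst t)) \<le> D}
        \<subseteq> (F X \<times> F D) \<times> {..<m}"
  proof
    fix t :: trm assume "t \<in> {t::trm. in_mono n (fst t) \<and> snd t < m \<and> deg (fst (fst t)) \<le> X \<and> deg (snd (fst t)) \<le> D}"
    hence t: "in_mono n (fst t)" "snd t < m" "deg (fst (fst t)) \<le> X" "deg (snd (fst t)) \<le> D" by auto
    have "fst (fst t) \<in> F X" by (rule inF) (use t in \<open>auto simp: in_mono_iff\<close>)
    moreover have "snd (fst t) \<in> F D" by (rule inF) (use t in \<open>auto simp: in_mono_iff\<close>)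
    ultimately show "t \<in> (F X \<times> F D) \<times> {..<m}" using t by (auto simp: mem_Times_iff)
  qed
  thus ?thesis by (rule finite_subset) (simp add: fF)
qed


theorem theorem4p6:
  fixes n m r :: nat
    and f :: "'k::field_char_0 fmod"
    and g :: "nat \<Rightarrow> 'k fmod"
  assumes "in_E n m f"
    and "\<forall>i<r. in_E n m (g i)"
    and "is_GB r g (submod n r g)"
  shows "\<exists>h Q. in_E n m h \<and> (\<forall>i<r. in_weyl n (Q i)) \<and>
           (\<lambda>v. f v - h v) = (\<lambda>v. \<Sum>i<r. act (Q i) (g i) v) \<and>
           (\<forall>i<r. reduced_wrt (g i) h)"
proof -
  have finf: "finite (supp f)" and Ef: "\<forall>w\<in>supp f. in_mono n (fst w) \<and> snd w < m"
    using assms(1) by (auto simp: in_E_def)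
  have gE: "\<And>i. i < r \<Longrightarrow> in_E n m (g i)" using assms(2) by blast
  have gne: "supp (g i) \<noteq> {}" if "i < r" for i
  proof
    assume "supp (g i) = {}"
    hence "g i = (\<lambda>_. 0)" by (auto simp: supp_def fun_eq_iff)
    thus False using assms(3) that by (auto simp: is_GB_def)
  qed
  define X where "X = (\<Sum>t\<in>supp f. deg (fst (fst t)))"
  define D where "D = (\<Sum>t\<in>supp f. deg (snd (fst t)))"
  define S where "S = {t::trm. in_mono n (fst t) \<and> snd t < m \<and> deg (fst (fst t)) \<le> X \<and> deg (snd (fst t)) \<le> D}"
  have finS: "finite S" unfolding S_def by (rule finite_S)
  have fS: "supp f \<subseteq> S"
  proof
    fix t assume t: "t \<in> supp f"
    have "deg (fst (fst t)) \<le> X" unfolding X_def by (rule member_le_sum) (use t finf in auto)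
    moreover have "deg (snd (fst t)) \<le> D" unfolding D_def by (rule member_le_sum) (use t finf in auto)
    ultimately show "t \<in> S" using Ef t unfolding S_def by auto
  qed
  define red :: "'k fmod \<Rightarrow> trm \<Rightarrow> bool" where
    "red = (\<lambda>h t. h t \<noteq> 0 \<and> (\<exists>i<r. \<exists>\<theta>. t = tmul \<theta> (ux (g i)) \<and> ord_d (tmul \<theta> (vd (g i))) \<le> ord_d (vd h)))"
  have red_iff: "red h t \<longleftrightarrow> h t \<noteq> 0 \<and> (\<exists>i<r. \<exists>\<theta>. t = tmul \<theta> (ux (g i)) \<and> ord_d (tmul \<theta> (vd (g i))) \<le> ord_d (vd h))"
    for h t unfolding red_def by simp
  let ?C = "\<exists>h Q. in_E n m h \<and> (\<forall>i<r. in_weyl n (Q i)) \<and>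
           (\<lambda>v. f v - h v) = (\<lambda>v. \<Sum>i<r. act (Q i) (g i) v) \<and>
           (\<forall>i<r. reduced_wrt (g i) h)"
  have fin_done: ?C if hS: "supp h \<subseteq> S" and Qw: "\<forall>i<r. in_weyl n (Q i)"
    and eq: "(\<lambda>v. f v - h v) = (\<lambda>v. \<Sum>i<r. act (Q i) (g i) v)" and nr: "\<forall>t. \<not> red h t" for h Q
  proof -
    have "in_E n m h" unfolding in_E_def
    proof
      show "finite (supp h)" using hS finS by (rule finite_subset)
      show "\<forall>w\<in>supp h. in_mono n (fst w) \<and> snd w < m" using hS unfolding S_def by auto
    qed
    moreover have "\<forall>i<r. reduced_wrt (g i) h"
      unfolding reduced_wrt_def
    proof (intro allI impI disjI2)
      fix i \<theta> assume i: "i < r" and hz: "h (tmul \<theta> (ux (g i))) \<noteq> 0"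
      show "\<not> ord_d (tmul \<theta> (vd (g i))) \<le> ord_d (vd h)"
      proof
        assume o: "ord_d (tmul \<theta> (vd (g i))) \<le> ord_d (vd h)"
        have "red h (tmul \<theta> (ux (g i)))" unfolding red_iff using hz i o by blast
        thus False using nr by blast
      qed
    qed
    ultimately show ?C using Qw eq by blast
  qed
  have main: ?C if "supp h \<subseteq> S" "\<forall>i<r. in_weyl n (Q i)"
    "(\<lambda>v. f v - h v) = (\<lambda>v. \<Sum>i<r. act (Q i) (g i) v)"
    "\<forall>t. red h t \<longrightarrow> card {s\<in>S. trm_less_x s t} < N" for N h Q
    using that
  proof (induction N arbitrary: h Q)
    case 0
    thus ?case using fin_done by blast
  next
    case (Suc N)
    note hS = Suc.prems(1) and Qw = Suc.prems(2) and eq = Suc.prems(3) and cardh = Suc.prems(4)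
    show ?case
    proof (cases "\<exists>t. red h t")
      case False thus ?thesis using fin_done hS Qw eq by blast
    next
      case True
      have finR: "finite {t. red h t}"
        by (rule finite_subset[OF _ finite_subset[OF hS finS]]) (auto simp: red_iff supp_def)
      have "\<exists>w. w \<in> {t. red h t} \<and> (\<forall>v\<in>{t. red h t}. v \<noteq> w \<longrightarrow> trm_less_x v w)"
        apply (rule finite_max_ex[of trm_less_x "{t. red h t}"])
           apply (erule (1) trm_less_x_trans)
          apply (erule trm_less_x_total)
         apply (rule finR)
        using True apply blast
        done
      then obtain w where wred: "red h w" and wmax: "\<And>t. red h t \<Longrightarrow> t \<noteq> w \<Longrightarrow> trm_less_x t w"
        by blast
      obtain i0 \<theta> where i0: "i0 < r" and hw: "h w \<noteq> 0" and wdef: "w = tmul \<theta> (ux (g i0))"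
        and ordc: "ord_d (tmul \<theta> (vd (g i0))) \<le> ord_d (vd h)"
        using wred by (auto simp: red_iff)
      define g0 where "g0 = g i0"
      have Eg0: "in_E n m g0" unfolding g0_def using gE i0 .
      have neg0: "supp g0 \<noteq> {}" unfolding g0_def using gne i0 .
      have fing0: "finite (supp g0)" using Eg0 by (simp add: in_E_def)
      have u0: "ux g0 \<in> supp g0" using ux_prop[OF fing0 neg0] by blast
      have wS: "w \<in> S" using hS hw by (auto simp: supp_def)
      have th: "in_mono n \<theta>"
      proof -
        have "in_mono n (fst w)" using wS unfolding S_def by simp
        hence "\<forall>i\<ge>n. fst \<theta> i + fst (fst (ux g0)) i = 0" "\<forall>i\<ge>n. snd \<theta> i + snd (fst (ux g0)) i = 0"
          unfolding wdef g0_def by (auto simp: in_mono_iff)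
        thus ?thesis by (auto simp: in_mono_iff)
      qed
      have Xw: "deg (fst (fst w)) \<le> X" using wS unfolding S_def by simp
      have finh: "finite (supp h)" using hS finS by (rule finite_subset)
      have hne: "supp h \<noteq> {}" using hw unfolding supp_def by blast
      have vdhS: "vd h \<in> S" using vd_prop[OF finh hne] hS by blast
      have Dh: "ord_d (vd h) \<le> D" using vdhS unfolding S_def ord_d_def by simp
      define c where "c = h w / g0 (ux g0)"
      define P :: "'k weyl" where "P = (\<lambda>\<theta>'. if \<theta>' = \<theta> then c else 0)"
      define h' where "h' = (\<lambda>v. h v - act P g0 v)"
      define Q' where "Q' = Q(i0 := (\<lambda>\<theta>'. Q i0 \<theta>' + P \<theta>'))"
      have g0u: "g0 (ux g0) \<noteq> 0" using u0 by (simp add: supp_def)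
      have actw: "act P g0 w = h w"
        unfolding P_def wdef g0_def[symmetric] using act_lead[OF Eg0 neg0 th, of c] g0u
        by (simp add: c_def wdef g0_def)
      have h'w: "h' w = 0" by (simp add: h'_def actw)
      have actb: "(v = w \<or> trm_less_x v w) \<and> ord_d v \<le> ord_d (vd h) \<and> in_mono n (fst v) \<and> snd v < m"
        if "act P g0 v \<noteq> 0" for v
        using act_bound[OF Eg0 neg0 th, of c v] that ordc unfolding P_def wdef g0_def by auto
      have h'S: "supp h' \<subseteq> S"
      proof
        fix v assume "v \<in> supp h'"
        hence "h v \<noteq> 0 \<or> act P g0 v \<noteq> 0" by (auto simp: supp_def h'_def)
        thus "v \<in> S"
        proof
          assume "h v \<noteq> 0" thus ?thesis using hS by (auto simp: supp_def)
        next
          assume a: "act P g0 v \<noteq> 0"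
          have "deg (fst (fst v)) \<le> deg (fst (fst w))" using actb[OF a] trm_less_x_deg[of v w] by auto
          moreover have "deg (snd (fst v)) \<le> D" using actb[OF a] Dh unfolding ord_d_def by simp
          ultimately show ?thesis using actb[OF a] Xw unfolding S_def by simp
        qed
      qed
      have finP: "finite (supp P)"
        by (rule finite_subset[of _ "{\<theta>}"]) (auto simp: supp_def P_def)
      have Q'w: "\<forall>i<r. in_weyl n (Q' i)"
      proof (intro allI impI)
        fix i assume i: "i < r"
        show "in_weyl n (Q' i)"
        proof (cases "i = i0")
          case False thus ?thesis using Qw i by (simp add: Q'_def)
        next
          case True
          have w0: "in_weyl n (Q i0)" using Qw i0 by blast
          have "supp (\<lambda>\<theta>'. Q i0 \<theta>' + P \<theta>') \<subseteq> supp (Q i0) \<union> {\<theta>}"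
            by (auto simp: supp_def P_def)
          moreover have "finite (supp (Q i0) \<union> {\<theta>})" using w0 by (simp add: in_weyl_def)
          moreover have "\<forall>x\<in>supp (Q i0) \<union> {\<theta>}. in_mono n x" using w0 th by (auto simp: in_weyl_def)
          ultimately have "in_weyl n (\<lambda>\<theta>'. Q i0 \<theta>' + P \<theta>')"
            unfolding in_weyl_def by (meson finite_subset subsetD)
          thus ?thesis using True by (simp add: Q'_def)
        qed
      qed
      have eq': "(\<lambda>v. f v - h' v) = (\<lambda>v. \<Sum>i<r. act (Q' i) (g i) v)"
      proof
        fix v
        have per: "act (Q' i) (g i) v = act (Q i) (g i) v + (if i = i0 then act P g0 v else 0)" for i
        proof (cases "i = i0")
          case True
          have "finite (supp (Q i0))" using Qw i0 by (simp add: in_weyl_def)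
          thus ?thesis using True act_add[of "Q i0" P "g i0" v] finP by (simp add: Q'_def g0_def)
        next
          case False thus ?thesis by (simp add: Q'_def)
        qed
        have "(\<Sum>i<r. act (Q' i) (g i) v) = (\<Sum>i<r. act (Q i) (g i) v) + (\<Sum>i<r. (if i = i0 then act P g0 v else 0))"
          by (simp add: per sum.distrib)
        also have "(\<Sum>i<r. (if i = i0 then act P g0 v else 0)) = act P g0 v"
          using i0 by simp
        also have "(\<Sum>i<r. act (Q i) (g i) v) = f v - h v" using fun_cong[OF eq, of v] by simp
        finally show "f v - h' v = (\<Sum>i<r. act (Q' i) (g i) v)" by (simp add: h'_def)
      qed
      have red'lt: "trm_less_x t w" if rt: "red h' t" for t
      proof -
        obtain i \<theta>' where h't: "h' t \<noteq> 0" and i: "i < r" and tdef: "t = tmul \<theta>' (ux (g i))"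
          and oc: "ord_d (tmul \<theta>' (vd (g i))) \<le> ord_d (vd h')"
          using rt by (auto simp: red_iff)
        have tw: "t \<noteq> w" using h't h'w by auto
        show ?thesis
        proof (cases "act P g0 t = 0")
          case False thus ?thesis using actb[OF False] tw by blast
        next
          case True
          hence ht: "h t \<noteq> 0" using h't by (simp add: h'_def)
          have finh': "finite (supp h')" using h'S finS by (rule finite_subset)
          have h'ne: "supp h' \<noteq> {}" using h't unfolding supp_def by blast
          have vdh': "vd h' \<in> supp h'" using vd_prop[OF finh' h'ne] by blast
          have "ord_d (vd h') \<le> ord_d (vd h)"
          proof (cases "act P g0 (vd h') = 0")
            case True
            hence "vd h' \<in> supp h" using vdh' by (simp add: supp_def h'_def)
            thus ?thesis by (rule vd_ord[OF finh])
          next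
            case False thus ?thesis using actb[OF False] by blast
          qed
          hence "ord_d (tmul \<theta>' (vd (g i))) \<le> ord_d (vd h)" using oc by linarith
          hence "red h t" unfolding red_iff using ht i tdef by blast
          thus ?thesis using wmax tw by blast
        qed
      qed
      have card': "\<forall>t. red h' t \<longrightarrow> card {s\<in>S. trm_less_x s t} < N"
      proof (intro allI impI)
        fix t assume rt: "red h' t"
        have tlt: "trm_less_x t w" by (rule red'lt[OF rt])
        have tS: "t \<in> S" using rt h'S by (auto simp: red_iff supp_def)
        have "{s\<in>S. trm_less_x s t} \<subset> {s\<in>S. trm_less_x s w}"
        proof
          show "{s\<in>S. trm_less_x s t} \<subseteq> {s\<in>S. trm_less_x s w}"
            using tlt trm_less_x_trans by blast
          show "{s\<in>S. trm_less_x s t} \<noteq> {s\<in>S. trm_less_x s w}"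
          proof
            assume "{s\<in>S. trm_less_x s t} = {s\<in>S. trm_less_x s w}"
            hence "t \<in> {s\<in>S. trm_less_x s t}" using tS tlt by blast
            thus False using trm_less_x_irrefl by blast
          qed
        qed
        hence "card {s\<in>S. trm_less_x s t} < card {s\<in>S. trm_less_x s w}"
          by (rule psubset_card_mono[rotated]) (use finS in auto)
        moreover have "card {s\<in>S. trm_less_x s w} < Suc N" using cardh wred by blast
        ultimately show "card {s\<in>S. trm_less_x s t} < N" by simp
      qed
      show ?thesis by (rule Suc.IH[OF h'S Q'w eq' card'])
    qed
  qed
  show ?thesis
  proof (rule main[of f "\<lambda>_ _. 0" "Suc (card S)"])
    show "supp f \<subseteq> S" by (rule fS)
    show "\<forall>i<r. in_weyl n ((\<lambda>_ _. 0) i)" by (simp add: in_weyl_def supp_def)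
    show "(\<lambda>v. f v - f v) = (\<lambda>v. \<Sum>i<r. act ((\<lambda>_ _. 0) i) (g i) v)" by (simp add: act_zero)
    show "\<forall>t. red f t \<longrightarrow> card {s\<in>S. trm_less_x s t} < Suc (card S)"
    proof (intro allI impI)
      fix t
      have "card {s\<in>S. trm_less_x s t} \<le> card S" by (rule card_mono[OF finS]) auto
      thus "card {s\<in>S. trm_less_x s t} < Suc (card S)" by simp
    qed
  qed
qed

end
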